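(* Let $P,Q$ be probability measures on $(\mathcal{X},\mathcal{A})$, $\lambda=\mathrm{TV}(P,Q)$, $\rho:\mathcal{X}\to I\subseteq\mathbb{R}$ measurable, and $\alpha\in(0,1)$. Let $Q_{m,n,\alpha}:J_{m,n}\times[0,1]\to\mathbb{R}$ be a bounding function at level $\alpha$ (respectively an asymptotic bounding function at level $\alpha$) for the counting process $(V_{m,z})_{z\in J_{m,n}}$ built from $\rho$, and define $$\hat\lambda^{\rho}=\inf\Big\{\tilde\lambda\in[0,1]:\ \sup_{z\in J_{m,n}}\big[V_{m,z}-Q_{m,n,\alpha}(z,\tilde\lambda)\big]\le0\Big\}.$$ Then $\mathbb{P}(\hat\lambda^{\rho}>\lambda)\le\alpha$ (respectively $\limsup_{N\to\infty}\mathbb{P}(\hat\lambda^{\rho}>\lambda)\le\alpha$).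
   Context: For each $N$: deterministic positive integers $m,n$ with $N=m+n$, $m\le n$, $m/N\to\pi\in(0,1)$; independent samples $X_1,\dots,X_m$ i.i.d. $\sim P$ and $Y_1,\dots,Y_n$ i.i.d. $\sim Q$. Let $\rho_{(1)}\le\dots\le\rho_{(N)}$ be the order statistics of the combined values $\rho(X_1),\dots,\rho(X_m),\rho(Y_1),\dots,\rho(Y_n)$, $J_{m,n}=\{1,\dots,N-1\}$, and $V_{m,z}=\#\{i\le m:\rho(X_i)\le\rho_{(z)}\}$. A function $Q_{m,n,\alpha}$ on $J_{m,n}\times[0,1]$ is a bounding function at level $\alpha$ if $\mathbb{P}\big(\sup_{z\in J_{m,n}}[V_{m,z}-Q_{m,n,\alpha}(z,\lambda)]>0\big)\le\alpha$ with $\lambda=\mathrm{TV}(P,Q)$ the true total variation distance; it is an asymptotic bounding function at level $\alpha$ if instead $\limsup_{N\to\infty}\mathbb{P}\big(\sup_{z\in J_{m,n}}[V_{m,z}-Q_{m,n,\alpha}(z,\lambda)]>0\big)\le\alpha$. *)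

theory Defs
  imports "HOL-Probability.Probability"
begin

definition TV :: "'a measure \<Rightarrow> 'a measure \<Rightarrow> real" where
  "TV P Q = (SUP A\<in>sets P. \<bar>measure P A - measure Q A\<bar>)"

definition order_stat :: "real list \<Rightarrow> nat \<Rightarrow> real" where
  "order_stat xs z = sort xs ! (z - 1)"

text \<open>Counting process V_{m,z}: a i = rho(X_i) (i = 1..m), b j = rho(Y_j) (j = 1..n).\<close>
definition V_count :: "nat \<Rightarrow> nat \<Rightarrow> (nat \<Rightarrow> real) \<Rightarrow> (nat \<Rightarrow> real) \<Rightarrow> nat \<Rightarrow> nat" where
  "V_count m n a b z =
     card {i \<in> {1..m}. a i \<le> order_stat (map a [1..<m+1] @ map b [1..<n+1]) z}"

definition sup_dev :: "nat \<Rightarrow> nat \<Rightarrow> (nat \<Rightarrow> real) \<Rightarrow> (nat \<Rightarrow> real)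
                        \<Rightarrow> (nat \<Rightarrow> real \<Rightarrow> real) \<Rightarrow> real \<Rightarrow> real" where
  "sup_dev m n a b Qz l = Max ((\<lambda>z. real (V_count m n a b z) - Qz z l) ` {1..m+n-1})"

text \<open>The estimator; infimum taken in the extended reals (inf of the empty set is +infinity).\<close>
definition lambda_hat :: "nat \<Rightarrow> nat \<Rightarrow> (nat \<Rightarrow> real) \<Rightarrow> (nat \<Rightarrow> real)
                        \<Rightarrow> (nat \<Rightarrow> real \<Rightarrow> real) \<Rightarrow> ereal" where
  "lambda_hat m n a b Qz = Inf (ereal ` {l \<in> {0..1}. sup_dev m n a b Qz l \<le> 0})"

end

theory Submission
  imports Defs
begin

lemma sort_nth_ge_iff:
  fixes xs :: "real list"
  assumes "k < length xs"
  shows "(x \<le> sort xs ! k) \<longleftrightarrow> length (filter (\<lambda>y. y < x) xs) \<le> k"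
proof -
  define ys where "ys = sort xs"
  have s: "sorted ys" and l: "length ys = length xs" by (auto simp: ys_def)
  have cnt: "length (filter (\<lambda>y. y < x) xs) = card {i. i < length ys \<and> ys ! i < x}"
  proof -
    have "length (filter (\<lambda>y. y < x) xs) = length (filter (\<lambda>y. y < x) ys)"
      unfolding ys_def by (metis mset_filter mset_sort size_mset)
    then show ?thesis by (simp add: length_filter_conv_card)
  qed
  show ?thesis
  proof
    assume h: "x \<le> sort xs ! k"
    have "{i. i < length ys \<and> ys ! i < x} \<subseteq> {..<k}"
    proof
      fix i assume "i \<in> {i. i < length ys \<and> ys ! i < x}"
      then have "i < length ys" "ys ! i < x" by auto
      moreover have "k \<le> i \<Longrightarrow> ys ! k \<le> ys ! i" using s \<open>i < length ys\<close> by (simp add: sorted_nth_mono)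
      ultimately show "i \<in> {..<k}" using h ys_def by force
    qed
    then show "length (filter (\<lambda>y. y < x) xs) \<le> k" unfolding cnt
      using card_mono[of "{..<k}"] by fastforce
  next
    assume h: "length (filter (\<lambda>y. y < x) xs) \<le> k"
    show "x \<le> sort xs ! k"
    proof (rule ccontr)
      assume "\<not> x \<le> sort xs ! k"
      then have lt: "ys ! k < x" by (simp add: ys_def)
      have "{..k} \<subseteq> {i. i < length ys \<and> ys ! i < x}"
      proof
        fix i assume "i \<in> {..k}"
        then have "i \<le> k" by simp
        then have "ys ! i \<le> ys ! k" using s assms l by (simp add: sorted_nth_mono)
        then show "i \<in> {i. i < length ys \<and> ys ! i < x}" using lt \<open>i \<le> k\<close> assms l by auto
      qed
      then have "card {..k} \<le> card {i. i < length ys \<and> ys ! i < x}" by (rule card_mono[rotated]) auto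
      then show False using h cnt by simp
    qed
  qed
qed

lemma count_map_upt:
  "length (filter P (map a [1..<m+1])) = card {k\<in>{1..m}. P (a k)}"
proof -
  have "length (filter P (map a [1..<m+1])) = length (filter (P o a) [1..<m+1])"
    by (simp add: filter_map)
  also have "\<dots> = card ({x. (P o a) x} \<inter> set [1..<m+1])"
    by (rule distinct_length_filter) simp
  also have "{x. (P o a) x} \<inter> set [1..<m+1] = {k\<in>{1..m}. P (a k)}" by auto
  finally show ?thesis .
qed

lemma count_list_eq:
  "length (filter (\<lambda>y. y < t) (map a [1..<m+1] @ map b [1..<n+1]))
   = card {k\<in>{1..m}. a k < t} + card {j\<in>{1..n}. b j < t}"
  using count_map_upt[of "\<lambda>y. y < t" a m] count_map_upt[of "\<lambda>y. y < t" b n] by simp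

lemma V_count_eq:
  assumes "z \<in> {1..m+n-1}"
  shows "V_count m n a b z = card {i\<in>{1..m}. card {k\<in>{1..m}. a k < a i} + card {j\<in>{1..n}. b j < a i} \<le> z - 1}"
proof -
  have "z - 1 < length (map a [1..<m+1] @ map b [1..<n+1])" using assms by auto
  then show ?thesis unfolding V_count_def order_stat_def
    by (simp only: sort_nth_ge_iff count_list_eq)
qed

lemma sup_dev_pos_iff:
  assumes "m + n \<ge> 2"
  shows "sup_dev m n a b Qz l > 0 \<longleftrightarrow> (\<exists>z\<in>{1..m+n-1}. real (card {i\<in>{1..m}. card {k\<in>{1..m}. a k < a i} + card {j\<in>{1..n}. b j < a i} \<le> z - 1}) - Qz z l > 0)"
proof -
  have ne: "{1..m+n-1} \<noteq> {}" using assms by auto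
  show ?thesis unfolding sup_dev_def
    by (subst Max_gr_iff) (use ne in \<open>auto simp: V_count_eq\<close>)
qed

lemma TV_bounds:
  assumes "prob_space P" "prob_space Q"
  shows "0 \<le> TV P Q" "TV P Q \<le> 1"
proof -
  have b: "\<bar>measure P A - measure Q A\<bar> \<le> 1" for A
    using prob_space.prob_le_1[OF assms(1), of A] prob_space.prob_le_1[OF assms(2), of A]
      measure_nonneg[of P A] measure_nonneg[of Q A]
    by linarith
  have bdd: "bdd_above ((\<lambda>A. \<bar>measure P A - measure Q A\<bar>) ` sets P)"
    using b by (intro bdd_aboveI[where M=1]) auto
  have "\<bar>measure P {} - measure Q {}\<bar> \<le> TV P Q" unfolding TV_def
    by (rule cSUP_upper[OF _ bdd]) simp
  then show "0 \<le> TV P Q" by simp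
  show "TV P Q \<le> 1" unfolding TV_def
    by (rule cSUP_least) (use b in auto)
qed

lemma meas_card:
  assumes "finite I" "\<And>i. i \<in> I \<Longrightarrow> {\<omega>\<in>space M. P i \<omega>} \<in> sets M"
  shows "(\<lambda>\<omega>. real (card {i\<in>I. P i \<omega>})) \<in> borel_measurable M"
proof -
  have eq: "real (card {i\<in>I. P i \<omega>}) = (\<Sum>i\<in>I. indicator {\<omega>\<in>space M. P i \<omega>} \<omega>)"
    if "\<omega> \<in> space M" for \<omega>
  proof -
    have "real (card {i\<in>I. P i \<omega>}) = (\<Sum>i\<in>{i\<in>I. P i \<omega>}. (1::real))" by simp
    also have "\<dots> = (\<Sum>i\<in>I. if P i \<omega> then 1 else 0)"
      using assms(1) by (rule sum.inter_filter)
    also have "\<dots> = (\<Sum>i\<in>I. indicator {\<omega>\<in>space M. P i \<omega>} \<omega>)"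
      using that by (intro sum.cong) (auto simp: indicator_def)
    finally show ?thesis .
  qed
  show ?thesis
    by (rule measurable_cong[THEN iffD2, OF eq]) (auto intro!: borel_measurable_sum borel_measurable_indicator assms(2))
qed

lemma event_meas:
  fixes a b :: "nat \<Rightarrow> 'w \<Rightarrow> real"
  assumes a: "\<And>i. i \<in> {1..m} \<Longrightarrow> a i \<in> borel_measurable M"
    and b: "\<And>j. j \<in> {1..n} \<Longrightarrow> b j \<in> borel_measurable M"
    and mn: "m + n \<ge> 2"
  shows "{\<omega>\<in>space M. sup_dev m n (\<lambda>i. a i \<omega>) (\<lambda>j. b j \<omega>) Qz l > 0} \<in> sets M"
proof -
  define c where "c i \<omega> = real (card {k\<in>{1..m}. a k \<omega> < a i \<omega>}) + real (card {j\<in>{1..n}. b j \<omega> < a i \<omega>})" for i \<omega>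
  have c: "c i \<in> borel_measurable M" if "i \<in> {1..m}" for i
    unfolding c_def using a b that
    by (intro borel_measurable_add meas_card) (auto intro!: borel_measurable_less)
  define V where "V z \<omega> = real (card {i\<in>{1..m}. c i \<omega> \<le> real (z - 1)})" for z \<omega>
  have V: "V z \<in> borel_measurable M" for z
    unfolding V_def using c by (intro meas_card) (auto intro!: borel_measurable_le)
  have eq: "{\<omega>\<in>space M. sup_dev m n (\<lambda>i. a i \<omega>) (\<lambda>j. b j \<omega>) Qz l > 0}
     = (\<Union>z\<in>{1..m+n-1}. {\<omega>\<in>space M. V z \<omega> - Qz z l > 0})"
  proof -
    have "\<And>z \<omega>. (card {k\<in>{1..m}. a k \<omega> < a i \<omega>} + card {j\<in>{1..n}. b j \<omega> < a i \<omega>} \<le> z - 1)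
            = (c i \<omega> \<le> real (z - 1))" for i
      unfolding c_def by linarith
    then show ?thesis unfolding V_def sup_dev_pos_iff[OF mn] by auto
  qed
  show ?thesis unfolding eq
    by (intro sets.finite_UN) (auto intro!: borel_measurable_less V)
qed

theorem proposition6:
  fixes Xsp :: "'x measure" and P Q :: "'x measure"
    and \<rho> :: "'x \<Rightarrow> real" and \<alpha> \<pi> :: real
    and M :: "nat \<Rightarrow> 'w measure"
    and m n :: "nat \<Rightarrow> nat"
    and X Y :: "nat \<Rightarrow> nat \<Rightarrow> 'w \<Rightarrow> 'x"
    and Qf :: "nat \<Rightarrow> nat \<Rightarrow> real \<Rightarrow> real"
  assumes P: "prob_space P" "sets P = sets Xsp"
    and Q: "prob_space Q" "sets Q = sets Xsp"
    and \<rho>_meas: "\<rho> \<in> borel_measurable Xsp"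
    and \<alpha>: "0 < \<alpha>" "\<alpha> < 1"
    and \<pi>: "0 < \<pi>" "\<pi> < 1"
    and mn: "\<And>N. N \<ge> 2 \<Longrightarrow> 0 < m N \<and> m N \<le> n N \<and> m N + n N = N"
    and lim: "(\<lambda>N. real (m N) / real N) \<longlonglongrightarrow> \<pi>"
    and M_prob: "\<And>N. prob_space (M N)"
    and X_meas: "\<And>N i. N \<ge> 2 \<Longrightarrow> i \<in> {1..m N} \<Longrightarrow> X N i \<in> measurable (M N) Xsp"
    and Y_meas: "\<And>N j. N \<ge> 2 \<Longrightarrow> j \<in> {1..n N} \<Longrightarrow> Y N j \<in> measurable (M N) Xsp"
    and X_distr: "\<And>N i. N \<ge> 2 \<Longrightarrow> i \<in> {1..m N} \<Longrightarrow> distr (M N) Xsp (X N i) = P"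
    and Y_distr: "\<And>N j. N \<ge> 2 \<Longrightarrow> j \<in> {1..n N} \<Longrightarrow> distr (M N) Xsp (Y N j) = Q"
    and indep: "\<And>N. N \<ge> 2 \<Longrightarrow> prob_space.indep_vars (M N) (\<lambda>_. Xsp)
                   (\<lambda>k. case k of Inl i \<Rightarrow> X N i | Inr j \<Rightarrow> Y N j)
                   (Inl ` {1..m N} \<union> Inr ` {1..n N})"
  shows
    "(\<forall>N\<ge>2.
        measure (M N) {\<omega> \<in> space (M N).
           sup_dev (m N) (n N) (\<lambda>i. \<rho> (X N i \<omega>)) (\<lambda>j. \<rho> (Y N j \<omega>)) (Qf N) (TV P Q) > 0}
          \<le> \<alpha>
        \<longrightarrow> measure (M N) {\<omega> \<in> space (M N).
           lambda_hat (m N) (n N) (\<lambda>i. \<rho> (X N i \<omega>)) (\<lambda>j. \<rho> (Y N j \<omega>)) (Qf N) > ereal (TV P Q)}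
          \<le> \<alpha>)
     \<and>
     (limsup (\<lambda>N. ereal (measure (M N) {\<omega> \<in> space (M N).
           sup_dev (m N) (n N) (\<lambda>i. \<rho> (X N i \<omega>)) (\<lambda>j. \<rho> (Y N j \<omega>)) (Qf N) (TV P Q) > 0}))
        \<le> ereal \<alpha>
      \<longrightarrow> limsup (\<lambda>N. ereal (measure (M N) {\<omega> \<in> space (M N).
           lambda_hat (m N) (n N) (\<lambda>i. \<rho> (X N i \<omega>)) (\<lambda>j. \<rho> (Y N j \<omega>)) (Qf N) > ereal (TV P Q)}))
        \<le> ereal \<alpha>)"
proof -
  have TV0: "0 \<le> TV P Q" and TV1: "TV P Q \<le> 1" using TV_bounds P(1) Q(1) by auto
  define A where "A N = {\<omega> \<in> space (M N).
           sup_dev (m N) (n N) (\<lambda>i. \<rho> (X N i \<omega>)) (\<lambda>j. \<rho> (Y N j \<omega>)) (Qf N) (TV P Q) > 0}" for N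
  define B where "B N = {\<omega> \<in> space (M N).
           lambda_hat (m N) (n N) (\<lambda>i. \<rho> (X N i \<omega>)) (\<lambda>j. \<rho> (Y N j \<omega>)) (Qf N) > ereal (TV P Q)}" for N
  have sub: "B N \<subseteq> A N" for N
  proof
    fix \<omega> assume "\<omega> \<in> B N"
    then have sp: "\<omega> \<in> space (M N)" and gt: "lambda_hat (m N) (n N) (\<lambda>i. \<rho> (X N i \<omega>)) (\<lambda>j. \<rho> (Y N j \<omega>)) (Qf N) > ereal (TV P Q)"
      unfolding B_def by auto
    show "\<omega> \<in> A N"
    proof (rule ccontr)
      assume "\<omega> \<notin> A N"
      then have "sup_dev (m N) (n N) (\<lambda>i. \<rho> (X N i \<omega>)) (\<lambda>j. \<rho> (Y N j \<omega>)) (Qf N) (TV P Q) \<le> 0"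
        using sp unfolding A_def by auto
      then have "lambda_hat (m N) (n N) (\<lambda>i. \<rho> (X N i \<omega>)) (\<lambda>j. \<rho> (Y N j \<omega>)) (Qf N) \<le> ereal (TV P Q)"
        unfolding lambda_hat_def using TV0 TV1 by (intro Inf_lower) auto
      then show False using gt by simp
    qed
  qed
  have Ameas: "A N \<in> sets (M N)" if N: "N \<ge> 2" for N
    unfolding A_def
  proof (rule event_meas)
    show "(\<lambda>\<omega>. \<rho> (X N i \<omega>)) \<in> borel_measurable (M N)" if "i \<in> {1..m N}" for i
      using measurable_comp[OF X_meas[OF N that] \<rho>_meas] by (simp add: o_def)
    show "(\<lambda>\<omega>. \<rho> (Y N j \<omega>)) \<in> borel_measurable (M N)" if "j \<in> {1..n N}" for j
      using measurable_comp[OF Y_meas[OF N that] \<rho>_meas] by (simp add: o_def)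
    show "m N + n N \<ge> 2" using mn[OF N] N by simp
  qed
  have le: "measure (M N) (B N) \<le> measure (M N) (A N)" if "N \<ge> 2" for N
    using finite_measure.finite_measure_mono[OF prob_space.finite_measure[OF M_prob] sub Ameas[OF that]] .
  have part1: "\<forall>N\<ge>2. measure (M N) (A N) \<le> \<alpha> \<longrightarrow> measure (M N) (B N) \<le> \<alpha>"
    using le by (meson order_trans)
  have ev: "eventually (\<lambda>N. ereal (measure (M N) (B N)) \<le> ereal (measure (M N) (A N))) sequentially"
    using le by (auto simp: eventually_sequentially)
  have "limsup (\<lambda>N. ereal (measure (M N) (B N))) \<le> limsup (\<lambda>N. ereal (measure (M N) (A N)))"
    by (rule Limsup_mono[OF ev])
  then have part2: "limsup (\<lambda>N. ereal (measure (M N) (A N))) \<le> ereal \<alpha> \<longrightarrow>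
        limsup (\<lambda>N. ereal (measure (M N) (B N))) \<le> ereal \<alpha>"
    by (meson order_trans)
  show ?thesis using part1 part2 unfolding A_def B_def by blast
qed

end
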